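(* For every $\varepsilon>0$ there exists a constant $a_\varepsilon>0$, independent of $n$, such that for every dimension $n\ge1$, $$\frac{\operatorname{vol}\big(B_1^n+(a_\varepsilon/\sqrt{n})\,B_2^n\big)}{\operatorname{vol}\big((a_\varepsilon/\sqrt{n})\,B_2^n\big)}\le 2^{\varepsilon n}.$$
   Context: For $p\in[1,\infty]$, $B_p^n=\{x\in\mathbb{R}^n : \|x\|_p\le 1\}$ is the closed unit $\ell_p$-ball in $\mathbb{R}^n$; $\operatorname{vol}$ is $n$-dimensional Lebesgue measure and $A+C=\{a+c: a\in A, c\in C\}$ is the Minkowski sum. *)

theory Defs
  imports "HOL-Analysis.Analysis"
begin

text \<open>Points of R^n are represented as extensional functions in PiE {..<n} (\<lambda>_. UNIV);
  n-dimensional Lebesgue measure is the product of n copies of lborel.\<close>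

definition Rn :: "nat \<Rightarrow> (nat \<Rightarrow> real) set" where
  "Rn n = PiE {..<n} (\<lambda>_. UNIV)"

definition lpball1 :: "nat \<Rightarrow> (nat \<Rightarrow> real) set" where
  "lpball1 n = {x \<in> Rn n. (\<Sum>i<n. \<bar>x i\<bar>) \<le> 1}"

definition lpball2 :: "nat \<Rightarrow> (nat \<Rightarrow> real) set" where
  "lpball2 n = {x \<in> Rn n. sqrt (\<Sum>i<n. (x i)\<^sup>2) \<le> 1}"

definition vscale :: "nat \<Rightarrow> real \<Rightarrow> (nat \<Rightarrow> real) set \<Rightarrow> (nat \<Rightarrow> real) set" where
  "vscale n r A = (\<lambda>x. restrict (\<lambda>i. r * x i) {..<n}) ` A"

definition msum :: "nat \<Rightarrow> (nat \<Rightarrow> real) set \<Rightarrow> (nat \<Rightarrow> real) set \<Rightarrow> (nat \<Rightarrow> real) set" where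
  "msum n A C = {restrict (\<lambda>i. a i + c i) {..<n} | a c. a \<in> A \<and> c \<in> C}"

definition vol :: "nat \<Rightarrow> (nat \<Rightarrow> real) set \<Rightarrow> real" where
  "vol n S = measure (PiM {..<n} (\<lambda>_. (lborel :: real measure))) S"

end

theory Submission
  imports Defs "HOL-Probability.Probability"
begin


lemma gauss1:
  fixes c :: real assumes c: "c > 0"
  shows "(\<integral>\<^sup>+s. ennreal (exp (- c * s^2)) \<partial>lborel) = ennreal (sqrt (pi / c))"
proof -
  define \<sigma> where "\<sigma> = 1 / sqrt (2 * c)"
  have sp: "\<sigma> > 0" using c by (simp add: \<sigma>_def)
  have s2: "\<sigma>^2 = 1 / (2*c)" using c by (simp add: \<sigma>_def power_divide)
  have eq: "exp (- c * s^2) = sqrt (pi / c) * normal_density 0 \<sigma> s" for s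
  proof -
    have "2 * pi * \<sigma>^2 = pi / c" using s2 c by (simp add: field_simps)
    moreover have "- ((s - 0)^2) / (2 * \<sigma>^2) = - c * s^2" proof -
      have "2 * \<sigma>^2 = 1 / c" using s2 by simp
      then show ?thesis using c by simp
    qed
    ultimately have nd: "normal_density 0 \<sigma> s = 1 / sqrt (pi / c) * exp (- c * s^2)"
      unfolding normal_density_def by simp
    have "sqrt (pi / c) > 0" using c by simp
    then show ?thesis using nd c by simp
  qed
  have "(\<integral>\<^sup>+s. ennreal (exp (- c * s^2)) \<partial>lborel)
      = (\<integral>\<^sup>+s. ennreal (sqrt (pi / c)) * ennreal (normal_density 0 \<sigma> s) \<partial>lborel)"
    by (intro nn_integral_cong, subst eq, rule ennreal_mult) (use c in auto)
  also have "\<dots> = ennreal (sqrt (pi / c)) * (\<integral>\<^sup>+s. ennreal (normal_density 0 \<sigma> s) \<partial>lborel)"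
    by (rule nn_integral_cmult) simp
  also have "(\<integral>\<^sup>+s. ennreal (normal_density 0 \<sigma> s) \<partial>lborel) = 1"
    using sp by (simp add: nn_integral_eq_integral)
  finally show ?thesis by simp
qed

abbreviation PM :: "nat \<Rightarrow> (nat \<Rightarrow> real) measure" where
  "PM n \<equiv> PiM {..<n} (\<lambda>_. (lborel::real measure))"

lemma space_PM: "space (PM n) = Rn n" by (simp add: space_PiM Rn_def)

lemma prod_int:
  assumes [measurable]: "f \<in> borel_measurable borel" and nn: "\<And>s. 0 \<le> f s"
  shows "(\<integral>\<^sup>+x. ennreal (\<Prod>i<n. f (x i)) \<partial>PM n) = (\<integral>\<^sup>+s. ennreal (f s) \<partial>lborel)^n"
proof -
  interpret product_sigma_finite "\<lambda>_. lborel::real measure" by standard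
  have "(\<integral>\<^sup>+x. ennreal (\<Prod>i<n. f (x i)) \<partial>PM n) = (\<integral>\<^sup>+x. (\<Prod>i<n. ennreal (f (x i))) \<partial>PM n)"
    by (simp add: prod_ennreal nn)
  also have "\<dots> = (\<Prod>i<n. \<integral>\<^sup>+s. ennreal (f s) \<partial>lborel)"
    by (rule product_nn_integral_prod) auto
  finally show ?thesis by simp
qed

definition Q :: "nat \<Rightarrow> (nat \<Rightarrow> real) \<Rightarrow> real" where "Q n x = (\<Sum>i<n. (x i)^2)"

lemma gaussn:
  fixes c :: real assumes c: "c > 0"
  shows "(\<integral>\<^sup>+x. ennreal (exp (- c * Q n x)) \<partial>PM n) = ennreal (sqrt (pi / c) ^ n)"
proof -
  have "exp (- c * Q n x) = (\<Prod>i<n. exp (- c * (x i)^2))" for x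
    by (simp add: Q_def sum_distrib_left exp_sum[symmetric] sum_negf)
  then have "(\<integral>\<^sup>+x. ennreal (exp (- c * Q n x)) \<partial>PM n) = (\<integral>\<^sup>+s. ennreal (exp (- c * s^2)) \<partial>lborel)^n"
    using prod_int[of "\<lambda>s. exp (- c * s^2)" n] by simp
  also have "\<dots> = ennreal (sqrt (pi / c) ^ n)" using gauss1[OF c] ennreal_power[of "sqrt (pi/c)" n] c by simp
  finally show ?thesis .
qed

lemma pim_scale:
  fixes c :: real assumes c: "c > 0"
  shows "finite I \<Longrightarrow> f \<in> borel_measurable (PiM I (\<lambda>_. lborel::real measure)) \<Longrightarrow>
    (\<integral>\<^sup>+x. f x \<partial>PiM I (\<lambda>_. lborel::real measure))
      = ennreal (c ^ card I) * (\<integral>\<^sup>+x. f (\<lambda>i\<in>I. c * x i) \<partial>PiM I (\<lambda>_. lborel::real measure))"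
proof (induction I arbitrary: f rule: finite_induct)
  case empty
  interpret product_sigma_finite "\<lambda>_. lborel::real measure" by standard
  show ?case by (subst (1 2) nn_integral_empty) (auto simp: restrict_def)
next
  case (insert i I)
  interpret product_sigma_finite "\<lambda>_. lborel::real measure" by standard
  note [measurable] = insert.prems
  define h where "h x = (\<integral>\<^sup>+y. f (x(i := c*y)) \<partial>lborel)" for x
  have hm: "h \<in> borel_measurable (PiM I (\<lambda>_. lborel))" unfolding h_def by measurable
  have m1: "(\<lambda>x. f (\<lambda>j\<in>insert i I. c * x j)) \<in> borel_measurable (PiM (insert i I) (\<lambda>_. lborel))"
    by measurable
  have "(\<integral>\<^sup>+x. f x \<partial>PiM (insert i I) (\<lambda>_. lborel))
      = (\<integral>\<^sup>+x. \<integral>\<^sup>+y. f (x(i:=y)) \<partial>lborel \<partial>PiM I (\<lambda>_. lborel))"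
    by (rule product_nn_integral_insert) (use insert in auto)
  also have "\<dots> = (\<integral>\<^sup>+x. ennreal c * h x \<partial>PiM I (\<lambda>_. lborel))"
  proof (rule nn_integral_cong)
    fix x assume x: "x \<in> space (PiM I (\<lambda>_. lborel::real measure))"
    have fm: "(\<lambda>y. f (x(i:=y))) \<in> borel_measurable borel"
      using measurable_comp[OF measurable_component_update insert.prems, OF x \<open>i \<notin> I\<close>]
      unfolding comp_def fun_upd_def measurable_lborel2 .
    then show "(\<integral>\<^sup>+y. f (x(i:=y)) \<partial>lborel) = ennreal c * h x"
      unfolding h_def using nn_integral_real_affine[OF fm, of c 0] c by simp
  qed
  also have "\<dots> = ennreal c * (\<integral>\<^sup>+x. h x \<partial>PiM I (\<lambda>_. lborel))"
    by (rule nn_integral_cmult) (rule hm)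
  also have "(\<integral>\<^sup>+x. h x \<partial>PiM I (\<lambda>_. lborel)) = ennreal (c ^ card I) * (\<integral>\<^sup>+x. h (\<lambda>j\<in>I. c * x j) \<partial>PiM I (\<lambda>_. lborel))"
    by (rule insert.IH) (rule hm)
  also have "(\<integral>\<^sup>+x. h (\<lambda>j\<in>I. c * x j) \<partial>PiM I (\<lambda>_. lborel))
     = (\<integral>\<^sup>+x. \<integral>\<^sup>+y. f (\<lambda>j\<in>insert i I. c * (x(i:=y)) j) \<partial>lborel \<partial>PiM I (\<lambda>_. lborel))"
  proof -
    have "(\<lambda>j\<in>I. c * x j)(i := c * y) = (\<lambda>j\<in>insert i I. c * (x(i:=y)) j)" for x y
      using insert by (auto simp: fun_eq_iff)
    then show ?thesis unfolding h_def by (intro nn_integral_cong) presburger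
  qed
  also have "\<dots> = (\<integral>\<^sup>+x. f (\<lambda>j\<in>insert i I. c * x j) \<partial>PiM (insert i I) (\<lambda>_. lborel))"
    by (rule product_nn_integral_insert[symmetric]) (use insert m1 in auto)
  finally have fin: "(\<integral>\<^sup>+x. f x \<partial>PiM (insert i I) (\<lambda>_. lborel)) = ennreal c * (ennreal (c ^ card I) *
     (\<integral>\<^sup>+x. f (\<lambda>j\<in>insert i I. c * x j) \<partial>PiM (insert i I) (\<lambda>_. lborel)))" .
  have ce: "ennreal (c ^ card (insert i I)) = ennreal c * ennreal (c ^ card I)"
    using insert c by (simp add: ennreal_mult[symmetric])
  show ?case unfolding ce fin by (simp only: mult.assoc)
qed

lemma exp_tail:
  fixes k b :: real assumes k: "k > 0"
  shows "(\<integral>\<^sup>+s. ennreal (exp (- k * s)) * indicator {b..} s \<partial>lborel) = ennreal (exp (- k * b) / k)"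
proof -
  have "integral\<^sup>N lborel (\<lambda>x. indicator {b..} x * exp (- k * x)) = ennreal (exp (- k * b) / k)"
    by (rule nn_integral_has_integral_lebesgue) (use has_integral_exp_minus_to_infinity[OF k, of b] in auto)
  moreover have "(\<integral>\<^sup>+s. ennreal (exp (- k * s)) * indicator {b..} s \<partial>lborel)
      = integral\<^sup>N lborel (\<lambda>x. indicator {b..} x * exp (- k * x))"
    by (intro nn_integral_cong) (auto split: split_indicator)
  ultimately show ?thesis by simp
qed

definition hub :: "real \<Rightarrow> real \<Rightarrow> real" where
  "hub m s = (if \<bar>s\<bar> \<le> m / 2 then s^2 else m * \<bar>s\<bar> - m^2 / 4)"

lemma hub_le:
  assumes m: "m > 0" shows "hub m (y + z) \<le> m * \<bar>y\<bar> + z^2"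
proof (cases "\<bar>y + z\<bar> \<le> m / 2")
  case True
  have "(y+z)^2 - z^2 = 2 * y * (y + z) - y^2" by (simp add: power2_eq_square algebra_simps)
  also have "\<dots> \<le> 2 * \<bar>y\<bar> * \<bar>y + z\<bar>"
  proof -
    have "y * (y + z) \<le> \<bar>y * (y + z)\<bar>" by (rule abs_ge_self)
    then have "y * (y + z) \<le> \<bar>y\<bar> * \<bar>y + z\<bar>" by (simp add: abs_mult)
    moreover have "0 \<le> y^2" by simp
    ultimately show ?thesis by linarith
  qed
  also have "\<dots> \<le> 2 * \<bar>y\<bar> * (m/2)" using True by (intro mult_left_mono) auto
  finally have h: "(y+z)^2 - z^2 \<le> 2 * \<bar>y\<bar> * (m/2)" .
  have "(y+z)^2 \<le> m * \<bar>y\<bar> + z^2" using h by (simp add: algebra_simps)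
  then show ?thesis using True by (simp add: hub_def)
next
  case False
  have "m * \<bar>y + z\<bar> \<le> m * \<bar>y\<bar> + m * \<bar>z\<bar>" using m
    by (metis abs_triangle_ineq distrib_left mult_left_mono less_imp_le)
  moreover have "m * \<bar>z\<bar> - m^2/4 \<le> z^2"
  proof -
    have "0 \<le> (\<bar>z\<bar> - m/2)^2" by simp
    then show ?thesis by (simp add: power2_eq_square algebra_simps)
  qed
  ultimately show ?thesis using False by (simp add: hub_def)
qed

lemma hub_meas[measurable]: "hub m \<in> borel_measurable borel"
  unfolding hub_def by measurable

lemma hub_int:
  fixes l m :: real assumes l: "l > 0" and m: "m > 0"
  shows "(\<integral>\<^sup>+s. ennreal (exp (- l * hub m s)) \<partial>lborel) \<le> ennreal (sqrt (pi / l) + 2 / (l * m))"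
proof -
  define F where "F s = ennreal (exp (l * m^2 / 4) * exp (- (l * m) * s)) * indicator {m/2..} s" for s
  have Fm[measurable]: "F \<in> borel_measurable borel" unfolding F_def by measurable
  have pw: "ennreal (exp (- l * hub m s)) \<le> ennreal (exp (- l * s^2)) + F s + F (0 + (-1) * s)" for s
  proof (cases "\<bar>s\<bar> \<le> m / 2")
    case True then show ?thesis by (simp add: hub_def)
  next
    case False
    show ?thesis
    proof (cases "s \<ge> 0")
      case True
      have hs: "hub m s = m * s - m^2/4" using False True by (simp add: hub_def)
      have "exp (l * m^2 / 4) * exp (- (l * m) * s) = exp (l * m^2 / 4 + - (l * m) * s)"
        by (rule exp_add[symmetric])
      also have "l * m^2 / 4 + - (l * m) * s = - l * hub m s" unfolding hs by (simp add: algebra_simps)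
      finally have eq: "F s = ennreal (exp (- l * hub m s))" using False True by (simp add: F_def)
      show ?thesis by (rule add_increasing2[OF zero_le], rule add_increasing[OF zero_le]) (simp add: eq)
    next
      case f2: False
      have hs: "hub m s = m * (-s) - m^2/4" using False f2 by (simp add: hub_def)
      have "exp (l * m^2 / 4) * exp (- (l * m) * (-s)) = exp (l * m^2 / 4 + - (l * m) * (-s))"
        by (rule exp_add[symmetric])
      also have "l * m^2 / 4 + - (l * m) * (-s) = - l * hub m s" unfolding hs by (simp add: algebra_simps)
      finally have eq: "F (- s) = ennreal (exp (- l * hub m s))" using False f2 by (simp add: F_def)
      show ?thesis by (rule add_increasing[OF zero_le]) (simp add: eq)
    qed
  qed
  have IF: "(\<integral>\<^sup>+s. F s \<partial>lborel) \<le> ennreal (1 / (l * m))"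
  proof -
    have "(\<integral>\<^sup>+s. F s \<partial>lborel) = (\<integral>\<^sup>+s. ennreal (exp (l * m^2 / 4)) * (ennreal (exp (- (l*m) * s)) * indicator {m/2..} s) \<partial>lborel)"
      unfolding F_def by (intro nn_integral_cong) (simp add: ennreal_mult mult.assoc)
    also have "\<dots> = ennreal (exp (l * m^2 / 4)) * (\<integral>\<^sup>+s. ennreal (exp (- (l*m) * s)) * indicator {m/2..} s \<partial>lborel)"
      by (rule nn_integral_cmult) measurable
    also have "\<dots> = ennreal (exp (l * m^2 / 4)) * ennreal (exp (- (l*m) * (m/2)) / (l * m))"
      using exp_tail[of "l*m" "m/2"] l m by simp
    also have "\<dots> = ennreal (exp (- (l * m^2 / 4)) / (l * m))"
    proof -
      have "exp (l * m^2 / 4) * exp (- (l*m) * (m/2)) = exp (l * m^2 / 4 + - (l*m) * (m/2))"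
        by (rule exp_add[symmetric])
      also have "l * m^2 / 4 + - (l*m) * (m/2) = - (l * m^2 / 4)" by (simp add: power2_eq_square field_simps)
      finally have "exp (l * m^2 / 4) * (exp (- (l*m) * (m/2)) / (l * m)) = exp (- (l * m^2 / 4)) / (l * m)"
        by simp
      then show ?thesis using l m by (subst ennreal_mult[symmetric]) auto
    qed
    also have "\<dots> \<le> ennreal (1 / (l * m))"
      using l m by (intro ennreal_leI divide_right_mono) auto
    finally show ?thesis .
  qed
  have IF2: "(\<integral>\<^sup>+s. F (0 + (-1) * s) \<partial>lborel) = (\<integral>\<^sup>+s. F s \<partial>lborel)"
    using nn_integral_real_affine[OF Fm, of "-1" 0] by simp
  have "(\<integral>\<^sup>+s. ennreal (exp (- l * hub m s)) \<partial>lborel)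
     \<le> (\<integral>\<^sup>+s. ennreal (exp (- l * s^2)) + F s + F (0 + (-1) * s) \<partial>lborel)"
    by (intro nn_integral_mono pw)
  also have "\<dots> = (\<integral>\<^sup>+s. ennreal (exp (- l * s^2)) \<partial>lborel) + (\<integral>\<^sup>+s. F s \<partial>lborel) + (\<integral>\<^sup>+s. F (0 + (-1) * s) \<partial>lborel)"
    by (subst nn_integral_add; simp)+
  also have "\<dots> \<le> ennreal (sqrt (pi / l)) + ennreal (1 / (l * m)) + ennreal (1 / (l * m))"
    using gauss1[OF l] IF IF2 by (intro add_mono) auto
  also have "\<dots> = ennreal (sqrt (pi / l) + 2 / (l * m))"
    using l m by (simp add: ennreal_plus[symmetric] del: ennreal_plus)
  finally show ?thesis .
qed

lemma Q_meas[measurable]: "Q n \<in> borel_measurable (PM n)"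
  unfolding Q_def by measurable

lemma vscale_ball:
  assumes r: "r > 0"
  shows "vscale n r (lpball2 n) = {x\<in>space (PM n). Q n x \<le> r^2}"
proof (intro set_eqI iffI)
  fix x assume "x \<in> vscale n r (lpball2 n)"
  then obtain y where y: "y \<in> lpball2 n" and x: "x = restrict (\<lambda>i. r * y i) {..<n}"
    unfolding vscale_def by auto
  have "sqrt (Q n y) \<le> 1" using y by (simp add: lpball2_def Q_def)
  then have Qy: "Q n y \<le> 1" by simp
  have "Q n x = r^2 * Q n y" unfolding x Q_def by (simp add: power_mult_distrib sum_distrib_left)
  also have "\<dots> \<le> r^2" using Qy by (simp add: mult_left_le)
  finally show "x \<in> {x\<in>space (PM n). Q n x \<le> r^2}" unfolding x by (simp add: space_PiM)
next
  fix x assume x: "x \<in> {x\<in>space (PM n). Q n x \<le> r^2}"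
  define y where "y = restrict (\<lambda>i. x i / r) {..<n}"
  have "Q n y = Q n x / r^2" unfolding y_def Q_def by (simp add: power_divide sum_divide_distrib)
  also have "\<dots> \<le> 1" using x r by simp
  finally have "y \<in> lpball2 n" unfolding lpball2_def Rn_def y_def by (simp add: Q_def)
  moreover have "x = restrict (\<lambda>i. r * y i) {..<n}"
    using x r unfolding y_def by (auto simp: space_PiM PiE_def extensional_def fun_eq_iff)
  ultimately show "x \<in> vscale n r (lpball2 n)" unfolding vscale_def by blast
qed

lemma markov_exp:
  assumes [measurable]: "f \<in> borel_measurable M" and l: "l \<ge> 0"
  shows "emeasure M {x\<in>space M. f x \<le> C} \<le> (\<integral>\<^sup>+x. ennreal (exp (l * (C - f x))) \<partial>M)"
proof -
  have "emeasure M {x\<in>space M. f x \<le> C} = (\<integral>\<^sup>+x. indicator {x\<in>space M. f x \<le> C} x \<partial>M)"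
    by simp
  also have "\<dots> \<le> (\<integral>\<^sup>+x. ennreal (exp (l * (C - f x))) \<partial>M)"
  proof (rule nn_integral_mono)
    fix x assume "x \<in> space M"
    show "indicator {x\<in>space M. f x \<le> C} x \<le> ennreal (exp (l * (C - f x)))"
      using l by (auto split: split_indicator intro!: mult_nonneg_nonneg)
  qed
  finally show ?thesis .
qed

lemma ball_fin: "emeasure (PM n) {x\<in>space (PM n). Q n x \<le> R} < \<infinity>"
proof -
  have "emeasure (PM n) {x\<in>space (PM n). Q n x \<le> R} \<le> (\<integral>\<^sup>+x. ennreal (exp (1 * (R - Q n x))) \<partial>PM n)"
    by (rule markov_exp) auto
  also have "\<dots> = (\<integral>\<^sup>+x. ennreal (exp R) * ennreal (exp (- 1 * Q n x)) \<partial>PM n)"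
    by (intro nn_integral_cong) (simp add: ennreal_mult[symmetric] exp_diff exp_minus field_simps)
  also have "\<dots> = ennreal (exp R) * ennreal (sqrt (pi / 1) ^ n)"
    using gaussn[of 1 n] by (subst nn_integral_cmult) auto
  also have "\<dots> < \<infinity>" by (simp add: ennreal_mult_less_top)
  finally show ?thesis .
qed

lemma ball_scale:
  assumes R: "R > 0"
  shows "emeasure (PM n) {x\<in>space (PM n). Q n x \<le> R^2} = ennreal (R^n) * emeasure (PM n) {x\<in>space (PM n). Q n x \<le> 1}"
proof -
  let ?S = "\<lambda>c. {x\<in>space (PM n). Q n x \<le> c}"
  have "emeasure (PM n) (?S (R^2)) = (\<integral>\<^sup>+x. indicator (?S (R^2)) x \<partial>PM n)" by simp
  also have "\<dots> = ennreal (R ^ card {..<n}) * (\<integral>\<^sup>+x. indicator (?S (R^2)) (\<lambda>i\<in>{..<n}. R * x i) \<partial>PM n)"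
    by (rule pim_scale[OF R]) auto
  also have "(\<integral>\<^sup>+x. indicator (?S (R^2)) (\<lambda>i\<in>{..<n}. R * x i) \<partial>PM n) = (\<integral>\<^sup>+x. indicator (?S 1) x \<partial>PM n)"
  proof (rule nn_integral_cong)
    fix x assume x: "x \<in> space (PM n)"
    have "Q n (\<lambda>i\<in>{..<n}. R * x i) = R^2 * Q n x" unfolding Q_def by (simp add: power_mult_distrib sum_distrib_left)
    moreover have "(\<lambda>i\<in>{..<n}. R * x i) \<in> space (PM n)" by (simp add: space_PiM)
    ultimately show "indicator (?S (R^2)) (\<lambda>i\<in>{..<n}. R * x i) = indicator (?S 1) x"
      using x R by (simp add: indicator_def)
  qed
  also have "(\<integral>\<^sup>+x. indicator (?S 1) x \<partial>PM n) = emeasure (PM n) (?S 1)" by simp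
  finally show ?thesis by simp
qed

lemma msum_elem:
  assumes t: "t > 0" and x: "x \<in> msum n (lpball1 n) (vscale n t (lpball2 n))"
  shows "x \<in> space (PM n) \<and> (\<exists>y z. (\<forall>i<n. x i = y i + z i) \<and> (\<Sum>i<n. \<bar>y i\<bar>) \<le> 1 \<and> Q n z \<le> t^2)"
proof -
  obtain y z where yz: "x = restrict (\<lambda>i. y i + z i) {..<n}" "y \<in> lpball1 n" "z \<in> vscale n t (lpball2 n)"
    using x unfolding msum_def by blast
  have "Q n z \<le> t^2" using yz(3) unfolding vscale_ball[OF t] by simp
  moreover have "(\<Sum>i<n. \<bar>y i\<bar>) \<le> 1" using yz(2) by (simp add: lpball1_def)
  moreover have "x \<in> space (PM n)" using yz(1) by (simp add: space_PiM)
  ultimately show ?thesis using yz(1) by auto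
qed

lemma msum_hub:
  assumes t: "t > 0" and m: "m > 0" and x: "x \<in> msum n (lpball1 n) (vscale n t (lpball2 n))"
  shows "x \<in> space (PM n)" "(\<Sum>i<n. hub m (x i)) \<le> m + t^2"
proof -
  obtain y z where yz: "\<forall>i<n. x i = y i + z i" "(\<Sum>i<n. \<bar>y i\<bar>) \<le> 1" "Q n z \<le> t^2"
    using msum_elem[OF t x] by blast
  show "x \<in> space (PM n)" using msum_elem[OF t x] by blast
  have "(\<Sum>i<n. hub m (x i)) \<le> (\<Sum>i<n. m * \<bar>y i\<bar> + (z i)^2)"
    using yz(1) hub_le[OF m] by (intro sum_mono) auto
  also have "\<dots> = m * (\<Sum>i<n. \<bar>y i\<bar>) + Q n z" by (simp add: Q_def sum.distrib sum_distrib_left)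
  also have "\<dots> \<le> m * 1 + t^2" using yz m by (intro add_mono mult_left_mono) auto
  finally show "(\<Sum>i<n. hub m (x i)) \<le> m + t^2" by simp
qed

lemma msum_ball:
  assumes t: "t > 0" and x: "x \<in> msum n (lpball1 n) (vscale n t (lpball2 n))"
  shows "x \<in> space (PM n)" "Q n x \<le> (1 + t)^2"
proof -
  obtain y z where yz: "\<forall>i<n. x i = y i + z i" "(\<Sum>i<n. \<bar>y i\<bar>) \<le> 1" "Q n z \<le> t^2"
    using msum_elem[OF t x] by blast
  show "x \<in> space (PM n)" using msum_elem[OF t x] by blast
  have QL: "Q n w = (L2_set w {..<n})^2" for w by (simp add: Q_def L2_set_def sum_nonneg)
  have "L2_set x {..<n} = L2_set (\<lambda>i. y i + z i) {..<n}" using yz(1) by (intro L2_set_cong) auto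
  also have "\<dots> \<le> L2_set y {..<n} + L2_set z {..<n}" by (rule L2_set_triangle_ineq)
  also have "\<dots> \<le> 1 + t"
  proof (intro add_mono)
    show "L2_set y {..<n} \<le> 1" using L2_set_le_sum_abs[of y "{..<n}"] yz(2) by linarith
    have "(L2_set z {..<n})^2 \<le> t^2" using yz(3) QL by simp
    then show "L2_set z {..<n} \<le> t" using t by (simp add: abs_le_square_iff[symmetric] power2_le_iff_abs_le)
  qed
  finally show "Q n x \<le> (1 + t)^2" unfolding QL by (intro power_mono) auto
qed



lemma ennreal_sum3: "0\<le>a \<Longrightarrow> 0\<le>b \<Longrightarrow> 0\<le>c \<Longrightarrow> 0\<le>d \<Longrightarrow> 0\<le>e \<Longrightarrow> 0\<le>f \<Longrightarrow>
  ennreal a * ennreal b + ennreal c * ennreal d + ennreal e * ennreal f = ennreal (a*b + c*d + e*f)"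
  by (simp add: ennreal_mult ennreal_plus)

lemma meas_le: assumes "emeasure M A \<le> ennreal B" "0 \<le> B" shows "measure M A \<le> B"
proof -
  have "enn2real (emeasure M A) \<le> enn2real (ennreal B)" by (rule enn2real_mono[OF assms(1)]) simp
  then show ?thesis using assms(2) by (simp add: measure_def)
qed

lemma ball_sets[measurable]: "{x\<in>space (PM n). Q n x \<le> R} \<in> sets (PM n)"
  by measurable

lemma ball_measure:
  assumes R: "R > 0"
  shows "measure (PM n) {x\<in>space (PM n). Q n x \<le> R^2} = R^n * measure (PM n) {x\<in>space (PM n). Q n x \<le> 1}"
proof -
  have "emeasure (PM n) {x\<in>space (PM n). Q n x \<le> 1} = ennreal (measure (PM n) {x\<in>space (PM n). Q n x \<le> 1})"
    using ball_fin[of n 1] by (simp add: emeasure_eq_ennreal_measure)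
  then show ?thesis using ball_scale[OF R, of n] R
    by (simp add: measure_def ennreal_mult[symmetric] enn2real_mult)
qed

lemma hubsum_meas[measurable]: "(\<lambda>x. \<Sum>i<n. hub m (x i)) \<in> borel_measurable (PM n)"
  by measurable

lemma upper_vol:
  assumes l: "l > 0" and m: "m > 0" and t: "t > 0"
  shows "vol n (msum n (lpball1 n) (vscale n t (lpball2 n))) \<le> exp (l * (m + t^2)) * (sqrt (pi / l) + 2 / (l * m))^n"
proof -
  let ?K = "msum n (lpball1 n) (vscale n t (lpball2 n))"
  let ?S = "{x\<in>space (PM n). (\<Sum>i<n. hub m (x i)) \<le> m + t^2}"
  have Sm: "?S \<in> sets (PM n)" by measurable
  have KS: "?K \<subseteq> ?S" using msum_hub[OF t m] by blast
  have "emeasure (PM n) ?S \<le> (\<integral>\<^sup>+x. ennreal (exp (l * ((m + t^2) - (\<Sum>i<n. hub m (x i))))) \<partial>PM n)"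
    by (rule markov_exp[OF hubsum_meas]) (use l in simp)
  also have "\<dots> = (\<integral>\<^sup>+x. ennreal (exp (l * (m + t^2))) * ennreal (\<Prod>i<n. exp (- l * hub m (x i))) \<partial>PM n)"
  proof (intro nn_integral_cong)
    fix x
    have "exp (l * ((m + t^2) - (\<Sum>i<n. hub m (x i)))) = exp (l * (m + t^2)) * exp (\<Sum>i<n. - l * hub m (x i))"
      by (simp add: exp_add[symmetric] right_diff_distrib sum_distrib_left sum_negf)
    also have "\<dots> = exp (l * (m + t^2)) * (\<Prod>i<n. exp (- l * hub m (x i)))" by (simp add: exp_sum)
    finally show "ennreal (exp (l * ((m + t^2) - (\<Sum>i<n. hub m (x i))))) = ennreal (exp (l * (m + t^2))) * ennreal (\<Prod>i<n. exp (- l * hub m (x i)))"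
      by (simp add: ennreal_mult[symmetric] prod_nonneg)
  qed
  also have "\<dots> = ennreal (exp (l * (m + t^2))) * (\<integral>\<^sup>+s. ennreal (exp (- l * hub m s)) \<partial>lborel)^n"
    using prod_int[of "\<lambda>s. exp (- l * hub m s)" n] by (subst nn_integral_cmult) auto
  also have "\<dots> \<le> ennreal (exp (l * (m + t^2))) * ennreal (sqrt (pi / l) + 2 / (l * m))^n"
  proof -
    have "(\<integral>\<^sup>+s. ennreal (exp (- l * hub m s)) \<partial>lborel)^n \<le> ennreal (sqrt (pi / l) + 2 / (l * m))^n"
      by (rule power_mono[OF hub_int[OF l m]]) simp
    then show ?thesis by (rule mult_left_mono) simp
  qed
  also have "\<dots> = ennreal (exp (l * (m + t^2))) * ennreal ((sqrt (pi / l) + 2 / (l * m))^n)"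
    by (subst ennreal_power) (use l m in auto)
  also have "\<dots> = ennreal (exp (l * (m + t^2)) * (sqrt (pi / l) + 2 / (l * m))^n)"
    by (rule ennreal_mult[symmetric]) (use l m in auto)
  finally have E: "emeasure (PM n) ?S \<le> ennreal (exp (l * (m + t^2)) * (sqrt (pi / l) + 2 / (l * m))^n)" .
  have fin: "?S \<in> fmeasurable (PM n)"
    by (rule fmeasurableI[OF Sm]) (use le_less_trans[OF E ennreal_less_top] in simp)
  have "measure (PM n) ?K \<le> measure (PM n) ?S"
  proof (cases "?K \<in> sets (PM n)")
    case True show ?thesis by (rule measure_mono_fmeasurable[OF KS True fin])
  next
    case False then show ?thesis by (simp add: measure_notin_sets)
  qed
  also have "\<dots> \<le> exp (l * (m + t^2)) * (sqrt (pi / l) + 2 / (l * m))^n" using meas_le[OF E] l m by simp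
  finally show ?thesis by (simp add: vol_def)
qed

lemma lower_vol:
  assumes l: "l > 0" and th: "0 < th" "th < l" and R: "R1 \<le> R2"
  shows "sqrt (pi / l)^n \<le> exp (- l * R1) * measure (PM n) {x\<in>space (PM n). Q n x \<le> R2}
     + exp (th * R1) * sqrt (pi / (l + th))^n + exp (- th * R2) * sqrt (pi / (l - th))^n"
proof -
  let ?S = "{x\<in>space (PM n). Q n x \<le> R2}"
  let ?m = "measure (PM n) ?S"
  have Se: "emeasure (PM n) ?S = ennreal ?m"
    using ball_fin[of n R2] by (simp add: emeasure_eq_ennreal_measure)
  have "ennreal (sqrt (pi / l)^n) = (\<integral>\<^sup>+x. ennreal (exp (- l * Q n x)) \<partial>PM n)"
    using gaussn[OF l] by simp
  also have "\<dots> \<le> (\<integral>\<^sup>+x. ennreal (exp (- l * R1)) * indicator ?S x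
        + ennreal (exp (th * R1)) * ennreal (exp (- (l + th) * Q n x))
        + ennreal (exp (- th * R2)) * ennreal (exp (- (l - th) * Q n x)) \<partial>PM n)"
  proof (rule nn_integral_mono)
    fix x assume x: "x \<in> space (PM n)"
    consider "Q n x < R1" | "R1 \<le> Q n x" "Q n x \<le> R2" | "R2 < Q n x" by linarith
    then show "ennreal (exp (- l * Q n x)) \<le> ennreal (exp (- l * R1)) * indicator ?S x
        + ennreal (exp (th * R1)) * ennreal (exp (- (l + th) * Q n x))
        + ennreal (exp (- th * R2)) * ennreal (exp (- (l - th) * Q n x))"
    proof cases
      case 1
      have "exp (- l * Q n x) \<le> exp (th * R1) * exp (- (l + th) * Q n x)"
        unfolding exp_add[symmetric] using 1 th by (simp add: algebra_simps)
      then have "ennreal (exp (- l * Q n x)) \<le> ennreal (exp (th * R1)) * ennreal (exp (- (l + th) * Q n x))"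
        by (simp add: ennreal_mult[symmetric])
      then show ?thesis by (intro add_increasing2[OF zero_le] add_increasing[OF zero_le])
    next
      case 2
      have "exp (- l * Q n x) \<le> exp (- l * R1)" using 2 l by simp
      then have "ennreal (exp (- l * Q n x)) \<le> ennreal (exp (- l * R1)) * indicator ?S x"
        using 2 x by (simp add: indicator_def)
      then show ?thesis by (intro add_increasing2[OF zero_le])
    next
      case 3
      have "exp (- l * Q n x) \<le> exp (- th * R2) * exp (- (l - th) * Q n x)"
        unfolding exp_add[symmetric] using 3 th by (simp add: algebra_simps)
      then have "ennreal (exp (- l * Q n x)) \<le> ennreal (exp (- th * R2)) * ennreal (exp (- (l - th) * Q n x))"
        by (simp add: ennreal_mult[symmetric])
      then show ?thesis by (intro add_increasing[OF zero_le])
    qed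
  qed
  also have "\<dots> = ennreal (exp (- l * R1)) * emeasure (PM n) ?S
        + ennreal (exp (th * R1)) * (\<integral>\<^sup>+x. ennreal (exp (- (l + th) * Q n x)) \<partial>PM n)
        + ennreal (exp (- th * R2)) * (\<integral>\<^sup>+x. ennreal (exp (- (l - th) * Q n x)) \<partial>PM n)"
  proof -
    have a: "(\<integral>\<^sup>+x. ennreal (exp (- l * R1)) * indicator ?S x
        + ennreal (exp (th * R1)) * ennreal (exp (- (l + th) * Q n x))
        + ennreal (exp (- th * R2)) * ennreal (exp (- (l - th) * Q n x)) \<partial>PM n)
      = (\<integral>\<^sup>+x. ennreal (exp (- l * R1)) * indicator ?S x \<partial>PM n)
        + (\<integral>\<^sup>+x. ennreal (exp (th * R1)) * ennreal (exp (- (l + th) * Q n x)) \<partial>PM n)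
        + (\<integral>\<^sup>+x. ennreal (exp (- th * R2)) * ennreal (exp (- (l - th) * Q n x)) \<partial>PM n)"
    proof -
      have m1: "(\<lambda>x. ennreal (exp (- l * R1)) * indicator ?S x) \<in> borel_measurable (PM n)" by measurable
      have m2: "(\<lambda>x. ennreal (exp (th * R1)) * ennreal (exp (- (l + th) * Q n x))) \<in> borel_measurable (PM n)" by measurable
      have m3: "(\<lambda>x. ennreal (exp (- th * R2)) * ennreal (exp (- (l - th) * Q n x))) \<in> borel_measurable (PM n)" by measurable
      have m12: "(\<lambda>x. ennreal (exp (- l * R1)) * indicator ?S x + ennreal (exp (th * R1)) * ennreal (exp (- (l + th) * Q n x))) \<in> borel_measurable (PM n)"
        using m1 m2 by (rule borel_measurable_add)
      have "(\<integral>\<^sup>+x. ennreal (exp (- l * R1)) * indicator ?S x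
        + ennreal (exp (th * R1)) * ennreal (exp (- (l + th) * Q n x))
        + ennreal (exp (- th * R2)) * ennreal (exp (- (l - th) * Q n x)) \<partial>PM n)
        = (\<integral>\<^sup>+x. ennreal (exp (- l * R1)) * indicator ?S x
        + ennreal (exp (th * R1)) * ennreal (exp (- (l + th) * Q n x)) \<partial>PM n)
        + (\<integral>\<^sup>+x. ennreal (exp (- th * R2)) * ennreal (exp (- (l - th) * Q n x)) \<partial>PM n)"
        by (rule nn_integral_add[OF m12 m3])
      also have "(\<integral>\<^sup>+x. ennreal (exp (- l * R1)) * indicator ?S x
        + ennreal (exp (th * R1)) * ennreal (exp (- (l + th) * Q n x)) \<partial>PM n)
        = (\<integral>\<^sup>+x. ennreal (exp (- l * R1)) * indicator ?S x \<partial>PM n)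
        + (\<integral>\<^sup>+x. ennreal (exp (th * R1)) * ennreal (exp (- (l + th) * Q n x)) \<partial>PM n)"
        by (rule nn_integral_add[OF m1 m2])
      finally show ?thesis .
    qed
    have b1: "(\<integral>\<^sup>+x. ennreal (exp (- l * R1)) * indicator ?S x \<partial>PM n) = ennreal (exp (- l * R1)) * emeasure (PM n) ?S"
      by (subst nn_integral_cmult) auto
    have b2: "(\<integral>\<^sup>+x. ennreal (exp (th * R1)) * ennreal (exp (- (l + th) * Q n x)) \<partial>PM n)
       = ennreal (exp (th * R1)) * (\<integral>\<^sup>+x. ennreal (exp (- (l + th) * Q n x)) \<partial>PM n)"
      by (rule nn_integral_cmult) measurable
    have b3: "(\<integral>\<^sup>+x. ennreal (exp (- th * R2)) * ennreal (exp (- (l - th) * Q n x)) \<partial>PM n)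
       = ennreal (exp (- th * R2)) * (\<integral>\<^sup>+x. ennreal (exp (- (l - th) * Q n x)) \<partial>PM n)"
      by (rule nn_integral_cmult) measurable
    show ?thesis unfolding a b1 b2 b3 ..
  qed
  also have "\<dots> = ennreal (exp (- l * R1) * ?m + exp (th * R1) * sqrt (pi / (l + th))^n
       + exp (- th * R2) * sqrt (pi / (l - th))^n)"
  proof -
    have g1: "(\<integral>\<^sup>+x. ennreal (exp (- (l + th) * Q n x)) \<partial>PM n) = ennreal (sqrt (pi / (l + th)) ^ n)"
      by (rule gaussn) (use l th in simp)
    have g2: "(\<integral>\<^sup>+x. ennreal (exp (- (l - th) * Q n x)) \<partial>PM n) = ennreal (sqrt (pi / (l - th)) ^ n)"
      by (rule gaussn) (use l th in simp)
    show ?thesis unfolding Se g1 g2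
      by (rule ennreal_sum3) (use l th in auto)
  qed
  finally have F: "ennreal (sqrt (pi / l)^n) \<le> ennreal (exp (- l * R1) * ?m + exp (th * R1) * sqrt (pi / (l + th))^n
       + exp (- th * R2) * sqrt (pi / (l - th))^n)" .
  have pos: "0 \<le> exp (- l * R1) * ?m + exp (th * R1) * sqrt (pi / (l + th))^n
       + exp (- th * R2) * sqrt (pi / (l - th))^n"
    using l th by (intro add_nonneg_nonneg mult_nonneg_nonneg) auto
  from F show ?thesis unfolding ennreal_le_iff[OF pos] .
qed


lemma vol_mono_aux:
  assumes "K \<subseteq> S" "S \<in> sets (PM n)" "emeasure (PM n) S < \<infinity>"
  shows "measure (PM n) K \<le> measure (PM n) S"
proof (cases "K \<in> sets (PM n)")
  case True show ?thesis by (rule measure_mono_fmeasurable[OF assms(1) True fmeasurableI[OF assms(2,3)]])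
next
  case False then show ?thesis by (simp add: measure_notin_sets)
qed

lemma sqrt_exp_half: "sqrt (exp w) = exp (w/2)"
  by (rule real_sqrt_unique) (simp_all add: power2_eq_square exp_add[symmetric])

lemma p_less1:
  assumes c: "c > 0" and e: "exp w < c" shows "exp (w/2) / sqrt c < 1"
proof -
  have "exp (w/2) = sqrt (exp w)" by (simp add: sqrt_exp_half)
  also have "\<dots> < sqrt c" using e by simp
  finally show ?thesis using c by simp
qed

lemma exp_le_inv:
  fixes x :: real assumes x: "x < 1" shows "exp x \<le> 1 / (1 - x)"
proof -
  have "1 - x \<le> exp (-x)" using exp_ge_add_one_self[of "-x"] by simp
  then have "(1 - x) * exp x \<le> exp (-x) * exp x" by (rule mult_right_mono) simp
  also have "exp (-x) * exp x = 1" by (simp add: exp_minus)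
  finally show ?thesis using x by (simp add: field_simps)
qed

lemma exp_le_inv2:
  fixes x :: real assumes x: "x \<ge> 0" shows "exp (-x) \<le> 1 / (1 + x)"
proof -
  have "1 + x \<le> exp x" by simp
  then have "(1 + x) * exp (-x) \<le> exp x * exp (-x)" by (rule mult_right_mono) simp
  also have "exp x * exp (-x) = 1" by (simp add: exp_minus)
  finally show ?thesis using x by (simp add: field_simps)
qed

theorem lemma3:
  fixes \<epsilon> :: real
  assumes "\<epsilon> > 0"
  shows "\<exists>a>0. \<forall>n::nat. n \<ge> 1 \<longrightarrow>
           vol n (msum n (lpball1 n) (vscale n (a / sqrt (real n)) (lpball2 n)))
             / vol n (vscale n (a / sqrt (real n)) (lpball2 n))
           \<le> 2 powr (\<epsilon> * real n)"
proof -
  define e1 where "e1 = min (\<epsilon> * ln 2 / 4) (1/2)"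
  have e1p: "0 < e1" "e1 \<le> 1/2" "4 * e1 \<le> \<epsilon> * ln 2" using assms by (auto simp: e1_def)
  define s where "s = e1 / 4"
  have sp: "0 < s" "s < 1" using e1p by (auto simp: s_def)
  define p1 where "p1 = exp (s * (1 - e1) / 2) / sqrt (1 + s)"
  define p2 where "p2 = exp (- (s * (1 + e1)) / 2) / sqrt (1 - s)"
  have p1: "0 < p1" "p1 < 1"
  proof -
    show "0 < p1" using sp by (simp add: p1_def)
    have u: "s * (1 - e1) < 1" using mult_left_le[of "1-e1" s] sp e1p by linarith
    have "exp (s * (1 - e1)) \<le> 1 / (1 - s * (1 - e1))" by (rule exp_le_inv[OF u])
    also have "\<dots> < 1 + s"
    proof -
      have "1 < (1 + s) * (1 - s * (1 - e1))" using sp e1p unfolding s_def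
        by (simp add: algebra_simps power2_eq_square) (smt (verit) mult_pos_pos)
      then show ?thesis using u by (simp add: field_simps)
    qed
    finally show "p1 < 1" unfolding p1_def by (intro p_less1) (use sp in auto)
  qed
  have p2: "0 < p2" "p2 < 1"
  proof -
    show "0 < p2" using sp by (simp add: p2_def)
    have v: "s * (1 + e1) \<ge> 0" using sp e1p by simp
    have "exp (- (s * (1 + e1))) \<le> 1 / (1 + s * (1 + e1))" by (rule exp_le_inv2[OF v])
    also have "\<dots> < 1 - s"
    proof -
      have "1 < (1 - s) * (1 + s * (1 + e1))" using sp e1p unfolding s_def
        by (simp add: algebra_simps power2_eq_square)
      then show ?thesis using v sp by (simp add: field_simps)
    qed
    finally show "p2 < 1" unfolding p2_def by (intro p_less1) (use sp in auto)
  qed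
  obtain N1 where N1: "p1 ^ N1 < 1/4" using real_arch_pow_inv[of "1/4" p1] p1 by auto
  obtain N2 where N2: "p2 ^ N2 < 1/4" using real_arch_pow_inv[of "1/4" p2] p2 by auto
  define N3 where "N3 = nat \<lceil>ln 2 / e1\<rceil>"
  define N0 where "N0 = max (max N1 N2) N3"
  have q: "2 powr \<epsilon> > 1" using assms by simp
  define a where "a = max (2 / e1^2) (sqrt (real N0) / (2 powr \<epsilon> - 1)) + 1"
  have a1: "2 / e1^2 \<le> a" and a2: "sqrt (real N0) / (2 powr \<epsilon> - 1) \<le> a" unfolding a_def by auto
  have ap: "a > 0" using a1 e1p by (smt (verit) divide_pos_pos zero_less_power)
  show ?thesis
  proof (intro exI[of _ a] conjI allI impI)
    show "a > 0" by (rule ap)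
    fix n :: nat assume n: "n \<ge> 1"
    define t where "t = a / sqrt (real n)"
    have tp: "t > 0" using ap n by (simp add: t_def)
    let ?K = "msum n (lpball1 n) (vscale n t (lpball2 n))"
    let ?B = "vscale n t (lpball2 n)"
    have volB: "vol n ?B = measure (PM n) {x\<in>space (PM n). Q n x \<le> t^2}"
      by (simp add: vol_def vscale_ball[OF tp])
    have pos: "0 < 2 powr (\<epsilon> * real n)" by simp
    have main: "vol n ?K / vol n ?B \<le> 2 powr (\<epsilon> * real n)"
    proof (cases "n < N0")
      case True
      define m1 where "m1 = measure (PM n) {x\<in>space (PM n). Q n x \<le> 1}"
      have "vol n ?K \<le> measure (PM n) {x\<in>space (PM n). Q n x \<le> (1+t)^2}"
        unfolding vol_def by (rule vol_mono_aux) (use msum_ball[OF tp] ball_fin in auto)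
      also have "\<dots> = (1+t)^n * m1" using ball_measure[of "1+t" n] tp by (simp add: m1_def)
      finally have VK: "vol n ?K \<le> (1+t)^n * m1" .
      have VB: "vol n ?B = t^n * m1" using ball_measure[OF tp, of n] volB by (simp add: m1_def)
      show ?thesis
      proof (cases "m1 = 0")
        case True then show ?thesis using VB pos by simp
      next
        case False
        then have m1p: "m1 > 0" unfolding m1_def using measure_nonneg by (metis less_le)
        have "vol n ?K / vol n ?B \<le> (1+t)^n * m1 / (t^n * m1)"
          unfolding VB using VK m1p tp by (intro divide_right_mono) auto
        also have "\<dots> = ((1+t)/t)^n" using m1p by (simp add: power_divide)
        also have "\<dots> \<le> (2 powr \<epsilon>)^n"
        proof (rule power_mono)
          have "sqrt (real n) \<le> sqrt (real N0)" using True by simp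
          also have "\<dots> \<le> a * (2 powr \<epsilon> - 1)" using a2 q by (simp add: divide_le_eq)
          finally have "sqrt (real n) / a \<le> 2 powr \<epsilon> - 1" using ap by (simp add: divide_le_eq mult.commute)
          moreover have "(1+t)/t = 1 + sqrt (real n) / a" using tp ap n unfolding t_def by (simp add: field_simps)
          ultimately show "(1+t)/t \<le> 2 powr \<epsilon>" by simp
          show "0 \<le> (1+t)/t" using tp by simp
        qed
        also have "\<dots> = 2 powr (\<epsilon> * real n)" by (simp add: powr_realpow[symmetric] powr_powr)
        finally show ?thesis .
      qed
    next
      case False
      then have nN: "n \<ge> N1" "n \<ge> N2" "n \<ge> N3" by (auto simp: N0_def)
      define nn where "nn = real n"
      have nnp: "nn > 0" using n by (simp add: nn_def)
      define m0 where "m0 = t^2 / (1 + e1)"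
      have m0p: "m0 > 0" using tp e1p by (simp add: m0_def)
      define l where "l = nn / (2 * m0)"
      have lp: "l > 0" using nnp m0p by (simp add: l_def)
      have lm0: "l * m0 = nn / 2" using m0p by (simp add: l_def)
      define mu where "mu = e1 * nn / l"
      have mup: "mu > 0" using e1p nnp lp by (simp add: mu_def)
      have lmu: "l * mu = e1 * nn" using lp by (simp add: mu_def)
      define th where "th = s * l"
      have thp: "0 < th" "th < l" using sp lp by (auto simp: th_def)
      define R1 where "R1 = (1 - e1) * m0"
      have "R1 \<le> (1 + e1) * m0" unfolding R1_def using m0p e1p by (intro mult_right_mono) auto
      also have "(1 + e1) * m0 = t^2" using e1p by (simp add: m0_def)
      finally have R12: "R1 \<le> t^2" .
      define G where "G = sqrt (pi / l)"
      have Gp: "G > 0" using lp by (simp add: G_def)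
      have U: "vol n ?K \<le> exp (l * (mu + t^2)) * (G + 2 / (l * mu))^n"
        unfolding G_def by (rule upper_vol[OF lp mup tp])
      have L: "G^n \<le> exp (- l * R1) * vol n ?B + exp (th * R1) * sqrt (pi / (l + th))^n
          + exp (- th * t^2) * sqrt (pi / (l - th))^n"
        unfolding G_def volB by (rule lower_vol[OF lp thp R12])
      have T1: "exp (th * R1) * sqrt (pi / (l + th))^n = G^n * p1^n"
      proof -
        have "th * R1 = s * (1 - e1) * (l * m0)" unfolding th_def R1_def by (simp add: mult_ac)
        also have "\<dots> = real n * (s * (1 - e1) / 2)" using lm0 by (simp add: nn_def)
        finally have "th * R1 = real n * (s * (1 - e1) / 2)" .
        then have e: "exp (th * R1) = exp (s * (1 - e1) / 2) ^ n" by (simp only: exp_of_nat_mult)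
        have "l + th = l * (1 + s)" unfolding th_def by (simp add: algebra_simps)
        then have "pi / (l + th) = (pi / l) / (1 + s)" by simp
        then have sq: "sqrt (pi / (l + th)) = G / sqrt (1 + s)" by (simp add: G_def real_sqrt_divide real_sqrt_mult)
        have "exp (s * (1 - e1) / 2) * (G / sqrt (1 + s)) = G * p1" by (simp add: p1_def)
        then show ?thesis unfolding e sq power_mult_distrib[symmetric] by simp
      qed
      have T2: "exp (- th * t^2) * sqrt (pi / (l - th))^n = G^n * p2^n"
      proof -
        have tt: "t^2 = (1 + e1) * m0" using e1p by (simp add: m0_def)
        have "- th * t^2 = - (s * (1 + e1) * (l * m0))" unfolding th_def tt by (simp add: mult_ac)
        also have "\<dots> = real n * (- (s * (1 + e1)) / 2)" using lm0 by (simp add: nn_def)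
        finally have "- th * t^2 = real n * (- (s * (1 + e1)) / 2)" .
        then have e: "exp (- th * t^2) = exp (- (s * (1 + e1)) / 2) ^ n" by (simp only: exp_of_nat_mult)
        have "l - th = l * (1 - s)" unfolding th_def by (simp add: algebra_simps)
        then have "pi / (l - th) = (pi / l) / (1 - s)" by simp
        then have sq: "sqrt (pi / (l - th)) = G / sqrt (1 - s)" by (simp add: G_def real_sqrt_divide real_sqrt_mult)
        have "exp (- (s * (1 + e1)) / 2) * (G / sqrt (1 - s)) = G * p2" by (simp add: p2_def)
        then show ?thesis unfolding e sq power_mult_distrib[symmetric] by simp
      qed
      have "p1^n \<le> p1^N1" by (rule power_decreasing[OF nN(1)]) (use p1 in auto)
      then have pn1: "p1^n \<le> 1/4" using N1 by linarith
      have "p2^n \<le> p2^N2" by (rule power_decreasing[OF nN(2)]) (use p2 in auto)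
      then have pn2: "p2^n \<le> 1/4" using N2 by linarith
      have Gn: "G^n > 0" using Gp by simp
      have "G^n \<le> exp (- l * R1) * vol n ?B + G^n * (1/4) + G^n * (1/4)"
        using L T1 T2 pn1 pn2 Gn by (smt (verit) mult_left_mono)
      then have LB0: "G^n / 2 \<le> exp (- l * R1) * vol n ?B" by simp
      have LB: "exp (l * R1) * G^n / 2 \<le> vol n ?B"
      proof -
        have "exp (l * R1) * (G^n / 2) \<le> exp (l * R1) * (exp (- l * R1) * vol n ?B)"
          using LB0 by (intro mult_left_mono) auto
        also have "\<dots> = vol n ?B" by (simp add: exp_minus mult.assoc[symmetric])
        finally show ?thesis by simp
      qed
      have lR1: "l * R1 = (1 - e1) * nn / 2" unfolding R1_def using lm0 by (simp add: algebra_simps)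
      have aux: "2 / (l * mu) \<le> e1 * G"
      proof -
        have "pi / l = 2 * pi * m0 / nn" using lp nnp m0p unfolding l_def by (simp add: field_simps)
        also have "\<dots> = (2 * pi / (1 + e1)) * (a / nn)^2"
          unfolding m0_def t_def nn_def using n by (simp add: power_divide field_simps power2_eq_square)
        also have "\<dots> \<ge> 1 * (a / nn)^2"
        proof (rule mult_right_mono)
          show "1 \<le> 2 * pi / (1 + e1)" using e1p pi_gt3 by (simp add: field_simps)
        qed simp
        finally have "(a / nn)^2 \<le> pi / l" by simp
        then have "a / nn \<le> G" unfolding G_def using ap nnp by (metis real_le_rsqrt)
        then have "e1 * (a / nn) \<le> e1 * G" using e1p by (intro mult_left_mono) auto
        moreover have "2 / (l * mu) \<le> e1 * (a / nn)"
        proof -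
          have "2 / (l * mu) = (2 / e1^2) * e1 / nn" unfolding lmu using e1p nnp by (simp add: field_simps power2_eq_square)
          also have "\<dots> \<le> a * e1 / nn" using a1 e1p nnp by (intro divide_right_mono mult_right_mono) auto
          finally show ?thesis by (simp add: mult.commute)
        qed
        ultimately show ?thesis by simp
      qed
      have UB: "vol n ?K \<le> exp (3 * e1 * nn + (1 - e1) * nn / 2) * G^n"
      proof -
        have "G + 2 / (l * mu) \<le> G * exp e1"
        proof -
          have "G + 2 / (l * mu) \<le> G * (1 + e1)" using aux by (simp add: algebra_simps)
          also have "\<dots> \<le> G * exp e1" using Gp by (intro mult_left_mono) auto
          finally show ?thesis .
        qed
        then have "(G + 2 / (l * mu))^n \<le> (G * exp e1)^n" by (intro power_mono) (use Gp mup lp in auto)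
        also have "\<dots> = G^n * exp (e1 * nn)" by (simp add: power_mult_distrib nn_def exp_of_nat_mult[symmetric] mult.commute)
        finally have "vol n ?K \<le> exp (l * (mu + t^2)) * (G^n * exp (e1 * nn))"
          using U by (smt (verit) exp_gt_zero mult_left_mono)
        also have "l * (mu + t^2) = e1 * nn + (1 + e1) * nn / 2"
        proof -
          have "t^2 = (1 + e1) * m0" using e1p by (simp add: m0_def)
          then show ?thesis using lmu lm0 by (simp add: algebra_simps)
        qed
        also have "exp (e1 * nn + (1 + e1) * nn / 2) * (G^n * exp (e1 * nn)) = exp (3 * e1 * nn + (1 - e1) * nn / 2) * G^n"
        proof -
          have ex: "e1 * nn + (1 + e1) * nn / 2 + e1 * nn = 3 * e1 * nn + (1 - e1) * nn / 2"
            by (simp add: field_simps)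
          have "exp (e1 * nn + (1 + e1) * nn / 2) * exp (e1 * nn) = exp (3 * e1 * nn + (1 - e1) * nn / 2)"
            by (simp only: exp_add[symmetric] ex)
          then show ?thesis by (simp add: algebra_simps)
        qed
        finally show ?thesis .
      qed
      have LB': "exp ((1 - e1) * nn / 2) * G^n / 2 \<le> vol n ?B" using LB lR1 by simp
      have pX: "0 < exp ((1 - e1) * nn / 2) * G^n / 2" using Gn by simp
      have "vol n ?K / vol n ?B \<le> exp (3 * e1 * nn + (1 - e1) * nn / 2) * G^n / (exp ((1 - e1) * nn / 2) * G^n / 2)"
        by (rule frac_le) (use UB LB' pX Gn in auto)
      also have "\<dots> = 2 * exp (3 * e1 * nn)"
      proof -
        have x: "exp (3 * e1 * nn + (1 - e1) * nn / 2) = exp (3 * e1 * nn) * exp ((1 - e1) * nn / 2)"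
          by (rule exp_add)
        have cancel: "\<And>A B C::real. B > 0 \<Longrightarrow> C > 0 \<Longrightarrow> A * B * C / (B * C / 2) = 2 * A"
          by (simp add: field_simps)
        show ?thesis unfolding x by (rule cancel) (use Gn in auto)
      qed
      also have "\<dots> \<le> exp (e1 * nn) * exp (3 * e1 * nn)"
      proof (rule mult_right_mono)
        have "ln 2 / e1 \<le> real N3" unfolding N3_def by (rule real_nat_ceiling_ge)
        also have "\<dots> \<le> nn" using nN(3) by (simp add: nn_def)
        finally have "ln 2 \<le> nn * e1" using e1p by (simp add: pos_divide_le_eq)
        then have "ln 2 \<le> e1 * nn" by (simp add: mult.commute)
        then have "exp (ln 2) \<le> exp (e1 * nn)" by (simp only: exp_le_cancel_iff)
        then show "2 \<le> exp (e1 * nn)" by simp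
      qed simp
      also have "\<dots> = exp (4 * e1 * nn)"
      proof -
        have "e1 * nn + 3 * e1 * nn = 4 * e1 * nn" by simp
        then show ?thesis by (simp only: exp_add[symmetric])
      qed
      also have "\<dots> \<le> exp (\<epsilon> * ln 2 * nn)"
        using mult_right_mono[OF e1p(3), of nn] nnp by simp
      also have "\<dots> = 2 powr (\<epsilon> * real n)" by (simp add: powr_def nn_def mult_ac)
      finally show ?thesis .
    qed
    have eqB: "vscale n (a / sqrt (real n)) (lpball2 n) = ?B" by (simp add: t_def)
    show "vol n (msum n (lpball1 n) (vscale n (a / sqrt (real n)) (lpball2 n)))
             / vol n (vscale n (a / sqrt (real n)) (lpball2 n)) \<le> 2 powr (\<epsilon> * real n)"
      unfolding eqB by (rule main)
  qed
qed


end
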